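(* For every two-point selection $f$ on $\mathbb{R}$ there is a two-point selection $g$ on $\mathbb{R}$ that has neither a $g$-minimum point nor a $g$-maximum point, such that $\mathcal{B}_f(\mathbb{R})=\mathcal{B}_g(\mathbb{R})$.
   Context: A two-point selection on $\mathbb{R}$ is a function $f$ from the set of two-element subsets of $\mathbb{R}$ to $\mathbb{R}$ with $f(F)\in F$. A point $x$ is an $f$-minimum if $f(\{x,y\})=x$ for all $y\neq x$, and an $f$-maximum if $f(\{x,y\})=y$ for all $y\ne x$. Write $r<_f s$ if $f(\{r,s\})=r$, $(\leftarrow,r)_f=\{x: x<_f r\}$, $(r,\rightarrow)_f=\{x: r<_f x\}$. The topology $\tau_f$ on $\mathbb{R}$ is generated (as a subbase) by all these sets, and $\mathcal{B}_f(\mathbb{R})$ is the $\sigma$-algebra generated by $\tau_f$. *)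

theory Defs
  imports "HOL-Analysis.Analysis"
begin

definition two_point_selection :: "(real set \<Rightarrow> real) \<Rightarrow> bool" where
  "two_point_selection f \<longleftrightarrow> (\<forall>x y. x \<noteq> y \<longrightarrow> f {x, y} \<in> {x, y})"

definition sel_minimum :: "(real set \<Rightarrow> real) \<Rightarrow> real \<Rightarrow> bool" where
  "sel_minimum f x \<longleftrightarrow> (\<forall>y. y \<noteq> x \<longrightarrow> f {x, y} = x)"

definition sel_maximum :: "(real set \<Rightarrow> real) \<Rightarrow> real \<Rightarrow> bool" where
  "sel_maximum f x \<longleftrightarrow> (\<forall>y. y \<noteq> x \<longrightarrow> f {x, y} = y)"

definition sel_less :: "(real set \<Rightarrow> real) \<Rightarrow> real \<Rightarrow> real \<Rightarrow> bool" where
  "sel_less f r s \<longleftrightarrow> r \<noteq> s \<and> f {r, s} = r"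

definition sel_subbase :: "(real set \<Rightarrow> real) \<Rightarrow> real set set" where
  "sel_subbase f = {{x. sel_less f x r} | r. True} \<union> {{x. sel_less f r x} | r. True}"

definition sel_topology :: "(real set \<Rightarrow> real) \<Rightarrow> real topology" where
  "sel_topology f = topology_generated_by (sel_subbase f)"

definition sel_borel :: "(real set \<Rightarrow> real) \<Rightarrow> real set set" where
  "sel_borel f = sigma_sets UNIV {U. openin (sel_topology f) U}"

end

theory Submission
  imports Defs
begin

lemma sel_cover:
  assumes "two_point_selection f" "x \<noteq> r"
  shows "sel_less f x r \<or> sel_less f r x"
  using assms unfolding two_point_selection_def sel_less_def
  by (metis insert_commute insert_iff singletonD)

lemma subbase_open:
  "S \<in> sel_subbase f \<Longrightarrow> generate_topology_on (sel_subbase f) S"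
  by (rule generate_topology_on.Basis)

lemma minus_point_open:
  assumes "two_point_selection f" "S \<in> sel_subbase f"
  shows "generate_topology_on (sel_subbase f) (S - {r})"
proof -
  have "S - {r} = S \<inter> ({x. sel_less f x r} \<union> {x. sel_less f r x})"
    using sel_cover[OF assms(1)] unfolding sel_less_def by auto
  also have "\<dots> = S \<inter> \<Union>{{x. sel_less f x r}, {x. sel_less f r x}}" by simp
  finally have e: "S - {r} = S \<inter> \<Union>{{x. sel_less f x r}, {x. sel_less f r x}}" .
  moreover have "generate_topology_on (sel_subbase f) (\<Union>{{x. sel_less f x r}, {x. sel_less f r x}})"
    by (rule generate_topology_on.UN) (auto intro!: generate_topology_on.Basis simp: sel_subbase_def)
  ultimately show ?thesis
    using assms(2) by (metis generate_topology_on.Basis generate_topology_on.Int)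
qed

lemma minus_finite_open:
  assumes "two_point_selection f" "S \<in> sel_subbase f" "finite F" "F \<noteq> {}"
  shows "generate_topology_on (sel_subbase f) (S - F)"
proof -
  have "S - F = \<Inter>((\<lambda>r. S - {r}) ` F)" using assms(4) by auto
  moreover have "generate_topology_on (sel_subbase f) (\<Inter>((\<lambda>r. S - {r}) ` F))"
    apply (rule generate_topology_on_Inter)
    using assms minus_point_open by auto
  ultimately show ?thesis by simp
qed

lemma finite_in_sigma:
  assumes "two_point_selection f" "finite G"
  shows "G \<in> sel_borel f"
  using assms(2)
proof (induction rule: finite_induct)
  case empty
  then show ?case unfolding sel_borel_def by (rule sigma_sets.Empty)
next
  case (insert x G)
  have "generate_topology_on (sel_subbase f) (UNIV - {x})"
  proof -
    have "UNIV - {x} = \<Union>{{y. sel_less f y x}, {y. sel_less f x y}}"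
      using sel_cover[OF assms(1)] unfolding sel_less_def by auto
    moreover have "generate_topology_on (sel_subbase f) (\<Union>{{y. sel_less f y x}, {y. sel_less f x y}})"
      by (rule generate_topology_on.UN) (auto intro!: generate_topology_on.Basis simp: sel_subbase_def)
    ultimately show ?thesis by simp
  qed
  then have "UNIV - {x} \<in> sel_borel f"
    unfolding sel_borel_def sel_topology_def openin_topology_generated_by_iff
    by (simp add: sigma_sets.Basic)
  then have "UNIV - (UNIV - {x}) \<in> sel_borel f"
    unfolding sel_borel_def by (rule sigma_sets.Compl)
  moreover have "UNIV - (UNIV - {x}) = {x}" by auto
  ultimately have "{x} \<in> sel_borel f" by simp
  then show ?case using insert sigma_sets_Un unfolding sel_borel_def
    by (metis insert_is_Un)
qed

lemma borel_sub:
  assumes f: "two_point_selection f" and g: "two_point_selection g"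
    and F: "finite F" "F \<noteq> {}"
    and agree: "\<And>x y. x \<notin> F \<Longrightarrow> g {x, y} = f {x, y}"
  shows "sel_borel g \<subseteq> sel_borel f"
proof -
  have key: "generate_topology_on (sel_subbase f) (U - F)"
    if "generate_topology_on (sel_subbase g) U" for U
    using that
  proof (induction rule: generate_topology_on.induct)
    case Empty
    then show ?case by (simp add: generate_topology_on.Empty)
  next
    case (Int a b)
    have "a \<inter> b - F = (a - F) \<inter> (b - F)" by auto
    then show ?case using Int by (simp add: generate_topology_on.Int)
  next
    case (UN K)
    have "\<Union>K - F = \<Union>((\<lambda>k. k - F) ` K)" by auto
    moreover have "generate_topology_on (sel_subbase f) (\<Union>((\<lambda>k. k - F) ` K))"
      by (rule generate_topology_on.UN) (use UN in auto)
    ultimately show ?case by simp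
  next
    case (Basis s)
    have lt: "sel_less g x r = sel_less f x r" if "x \<notin> F" for x r
      using agree[OF that, of r] unfolding sel_less_def by auto
    have gt: "sel_less g r x = sel_less f r x" if "x \<notin> F" for x r
      using agree[OF that, of r] unfolding sel_less_def by (auto simp: insert_commute)
    from Basis obtain r where "s = {x. sel_less g x r} \<or> s = {x. sel_less g r x}"
      unfolding sel_subbase_def by auto
    then obtain s' where s': "s' \<in> sel_subbase f" "s - F = s' - F"
    proof
      assume "s = {x. sel_less g x r}"
      then have "s - F = {x. sel_less f x r} - F" using lt by auto
      moreover have "{x. sel_less f x r} \<in> sel_subbase f" unfolding sel_subbase_def by auto
      ultimately show thesis using that by blast
    next
      assume "s = {x. sel_less g r x}"
      then have "s - F = {x. sel_less f r x} - F" using gt by auto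
      moreover have "{x. sel_less f r x} \<in> sel_subbase f" unfolding sel_subbase_def by auto
      ultimately show thesis using that by blast
    qed
    then show ?case using minus_finite_open[OF f s'(1) F] by simp
  qed
  have "U \<in> sel_borel f" if "openin (sel_topology g) U" for U
  proof -
    have "generate_topology_on (sel_subbase f) (U - F)"
      using key that unfolding sel_topology_def openin_topology_generated_by_iff by blast
    then have 1: "U - F \<in> sel_borel f"
      unfolding sel_borel_def sel_topology_def openin_topology_generated_by_iff
      by (simp add: sigma_sets.Basic)
    have 2: "U \<inter> F \<in> sel_borel f" using finite_in_sigma[OF f] F by simp
    have "U = (U - F) \<union> (U \<inter> F)" by auto
    then show ?thesis using 1 2 sigma_sets_Un unfolding sel_borel_def by metis
  qed
  then show ?thesis unfolding sel_borel_def
    by (intro sigma_sets_mono) auto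
qed

definition rev_sel :: "(real set \<Rightarrow> real) \<Rightarrow> real set \<Rightarrow> real" where
  "rev_sel f S = (SOME z. z \<in> S \<and> z \<noteq> f S)"

lemma rev_sel_eq:
  assumes "x \<noteq> y" "f {x, y} \<in> {x, y}"
  shows "rev_sel f {x, y} = (if f {x, y} = x then y else x)"
proof -
  have "\<exists>z. z \<in> {x, y} \<and> z \<noteq> f {x, y}" using assms by auto
  from someI_ex[OF this] have "rev_sel f {x,y} \<in> {x, y} \<and> rev_sel f {x,y} \<noteq> f {x, y}"
    unfolding rev_sel_def .
  then show ?thesis using assms by auto
qed

definition gsel :: "(real set \<Rightarrow> real) \<Rightarrow> real set \<Rightarrow> real \<Rightarrow> real \<Rightarrow> real \<Rightarrow> real set \<Rightarrow> real" where
  "gsel f M a b c S = (if S = {a, b} then a else if S = {b, c} then b else if S = {a, c} then c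
     else if (\<exists>m\<in>M. \<exists>y\<in>{a,b,c}. S = {m, y}) then rev_sel f S else f S)"

lemma min_unique: "sel_minimum f x \<Longrightarrow> sel_minimum f y \<Longrightarrow> x = y"
  unfolding sel_minimum_def by (metis insert_commute)

lemma max_unique: "sel_maximum f x \<Longrightarrow> sel_maximum f y \<Longrightarrow> x = y"
  unfolding sel_maximum_def by (metis insert_commute)

lemma finite_unique: "(\<And>x y. P x \<Longrightarrow> P y \<Longrightarrow> x = y) \<Longrightarrow> finite {x. P x}"
proof (cases "\<exists>x. P x")
  case True
  then obtain x where "P x" by blast
  assume u: "\<And>x y. P x \<Longrightarrow> P y \<Longrightarrow> x = y"
  then have "{x. P x} \<subseteq> {x}" using \<open>P x\<close> by blast
  then show ?thesis using finite_subset by blast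
qed simp

theorem lemma2p2:
  assumes "two_point_selection f"
  shows "\<exists>g. two_point_selection g \<and> (\<nexists>x. sel_minimum g x) \<and> (\<nexists>x. sel_maximum g x)
             \<and> sel_borel f = sel_borel g"
proof -
  define M where "M = {x. sel_minimum f x} \<union> {x. sel_maximum f x}"
  have finM: "finite M" unfolding M_def
    using finite_unique[of "sel_minimum f"] finite_unique[of "sel_maximum f"]
      min_unique max_unique by blast
  have "infinite (UNIV - M :: real set)"
    using finM by (simp add: Diff_infinite_finite infinite_UNIV_char_0)
  then obtain C where C: "finite C" "card C = 3" "C \<subseteq> UNIV - M"
    using infinite_arbitrarily_large by blast
  then obtain a b c where abc: "C = {a, b, c}" "a \<noteq> b" "b \<noteq> c" "a \<noteq> c"
    unfolding card_3_iff by blast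
  have notM: "a \<notin> M" "b \<notin> M" "c \<notin> M" using C abc by auto
  define F where "F = M \<union> {a, b, c}"
  have finF: "finite F" "F \<noteq> {}" using finM unfolding F_def by auto
  define g where "g = gsel f M a b c"
  have fsel: "x \<noteq> y \<Longrightarrow> f {x, y} \<in> {x, y}" for x y
    using assms unfolding two_point_selection_def by auto
  have agree: "g {x, y} = f {x, y}" if "x \<notin> F" for x y
    using that unfolding g_def gsel_def F_def by (auto simp: doubleton_eq_iff)
  have gsel: "two_point_selection g"
    unfolding two_point_selection_def
  proof (intro allI impI)
    fix x y :: real assume xy: "x \<noteq> y"
    show "g {x, y} \<in> {x, y}"
    proof (cases "(\<exists>m\<in>M. \<exists>z\<in>{a,b,c}. {x, y} = {m, z})")
      case True
      have "rev_sel f {x, y} \<in> {x, y}" using rev_sel_eq[of x y f, OF xy fsel[OF xy]] by auto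
      then show ?thesis unfolding g_def gsel_def using True by auto
    next
      case False
      then show ?thesis unfolding g_def gsel_def using fsel[OF xy] by auto
    qed
  qed
  have gab: "g {a, b} = a" and gbc: "g {b, c} = b" and gac: "g {a, c} = c"
    unfolding g_def gsel_def using abc by (auto simp: doubleton_eq_iff)
  have gM: "g {m, a} = (if f {m, a} = m then a else m)" if "m \<in> M" for m
  proof -
    have ma: "m \<noteq> a" using that notM by auto
    have "g {m, a} = rev_sel f {m, a}"
      unfolding g_def gsel_def using that notM abc by (auto simp: doubleton_eq_iff)
    then show ?thesis using rev_sel_eq[of m a f, OF ma fsel[OF ma]] by simp
  qed
  obtain w where w: "w \<notin> F"
    using finF(1) by (metis ex_new_if_finite infinite_UNIV_char_0)
  have nomin: "\<not> sel_minimum g x" for x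
  proof
    assume mn: "sel_minimum g x"
    show False
    proof (cases "x \<in> F")
      case False
      then have "sel_minimum f x" using mn agree unfolding sel_minimum_def by auto
      then show False using False unfolding F_def M_def by auto
    next
      case True
      show False
      proof (cases "x \<in> M")
        case True
        have wx: "w \<noteq> x" using w True unfolding F_def by auto
        have ax: "a \<noteq> x" using True notM by auto
        show False
        proof (cases "sel_minimum f x")
          case True
          then have "f {x, a} = x" using ax unfolding sel_minimum_def by auto
          then show False using gM[OF \<open>x \<in> M\<close>] mn ax unfolding sel_minimum_def by auto
        next
          case False
          then have "sel_maximum f x" using True unfolding M_def by auto
          then have "f {x, w} = w" using wx unfolding sel_maximum_def by auto
          moreover have "g {w, x} = f {w, x}" using agree w by blast
          ultimately show False using mn wx unfolding sel_minimum_def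
            by (metis insert_commute)
        qed
      next
        case False
        then have "x = a \<or> x = b \<or> x = c" using \<open>x \<in> F\<close> unfolding F_def by auto
        then show False using mn gab gbc gac abc unfolding sel_minimum_def
          by (metis insert_commute)
      qed
    qed
  qed
  have nomax: "\<not> sel_maximum g x" for x
  proof
    assume mx: "sel_maximum g x"
    show False
    proof (cases "x \<in> F")
      case False
      then have "sel_maximum f x" using mx agree unfolding sel_maximum_def by auto
      then show False using False unfolding F_def M_def by auto
    next
      case True
      show False
      proof (cases "x \<in> M")
        case True
        have wx: "w \<noteq> x" using w True unfolding F_def by auto
        have ax: "a \<noteq> x" using True notM by auto
        show False
        proof (cases "sel_maximum f x")
          case True
          then have "f {x, a} = a" using ax unfolding sel_maximum_def by auto
          then show False using gM[OF \<open>x \<in> M\<close>] mx ax unfolding sel_maximum_def by auto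
        next
          case False
          then have "sel_minimum f x" using True unfolding M_def by auto
          then have "f {x, w} = x" using wx unfolding sel_minimum_def by auto
          moreover have "g {w, x} = f {w, x}" using agree w by blast
          ultimately show False using mx wx unfolding sel_maximum_def
            by (metis insert_commute)
        qed
      next
        case False
        then have "x = a \<or> x = b \<or> x = c" using \<open>x \<in> F\<close> unfolding F_def by auto
        then show False using mx gab gbc gac abc unfolding sel_maximum_def
          by (metis insert_commute)
      qed
    qed
  qed
  have "sel_borel g \<subseteq> sel_borel f" using borel_sub[OF assms gsel finF agree] .
  moreover have "sel_borel f \<subseteq> sel_borel g" using borel_sub[OF gsel assms finF] agree by metis
  ultimately show ?thesis using gsel nomin nomax by blast
qed

end
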